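(* Let $n\ge 2$ and $$\mathcal M=\{S+L:\ S\in\mathcal S_{\neq},\ L\in l(S)\}\subseteq M(n,\mathbb R).$$ Then (i) $\mathcal M$ is an open, dense subset of $M(n,\mathbb R)$; consequently $M(n,\mathbb R)\setminus\mathcal M$ is meager and $\mathcal M$ is an $n^2$-dimensional $C^\infty$ manifold in $\mathbb R^{n^2}\cong M(n,\mathbb R)$; (ii) for every $M\in\mathcal M$, setting $\Pi_x=x^{-M}x^{-M^*}$ for $x>0$, one has $\bigcap_{x>0}G(\Pi_x)=\{I,-I\}$.
   Context: $\mathcal S(n,\mathbb R)$ denotes the real symmetric $n\times n$ matrices and $\mathcal S_{\neq}$ those whose $n$ eigenvalues are pairwise distinct; $so(n)$ denotes the real skew-symmetric matrices, so every $M\in M(n,\mathbb R)$ decomposes uniquely as $M=S+L$ with $S=(M+M^* )/2$, $L=(M-M^* )/2$. For an orthonormal basis $o_1,\dots,o_n$ of $\mathbb R^n$, $\mathcal L_{\mathrm{invar}}(o_1,\dots,o_n)$ is the set of $L\in so(n)$ for which some subset $\{o_{j_1},\dots,o_{j_k}\}$, $1\le k<n$, spans an invariant subspace of $L$. For $S\in\mathcal S_{\neq}$, $l(S)=so(n)\setminus\mathcal L_{\mathrm{invar}}(o_1,\dots,o_n)$ where $o_1,\dots,o_n$ is an orthonormal eigenbasis of $S$. $x^{-M}=\exp(-M\log x)$, and $G(\Pi)=\{O\in O(n):O\Pi=\Pi O\}$. *)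

theory Defs
  imports "HOL-Analysis.Analysis"
begin

fun mat_pow :: "real^'n^'n \<Rightarrow> nat \<Rightarrow> real^'n^'n" where
  "mat_pow A 0 = mat 1"
| "mat_pow A (Suc k) = A ** mat_pow A k"

definition mat_exp :: "real^'n^'n \<Rightarrow> real^'n^'n" where
  "mat_exp A = (\<Sum>k. (1 / fact k) *\<^sub>R mat_pow A k)"

text \<open>x^(-M) = exp(-M log x).\<close>
definition mat_rpow_neg :: "real \<Rightarrow> real^'n^'n \<Rightarrow> real^'n^'n" where
  "mat_rpow_neg x M = mat_exp (- (ln x *\<^sub>R M))"

definition symmetric_mat :: "real^'n^'n \<Rightarrow> bool" where
  "symmetric_mat S \<longleftrightarrow> transpose S = S"

definition skew_mat :: "real^'n^'n \<Rightarrow> bool" where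
  "skew_mat L \<longleftrightarrow> transpose L = - L"

definition eigenvalues :: "real^'n^'n \<Rightarrow> real set" where
  "eigenvalues A = {c. \<exists>v. v \<noteq> 0 \<and> A *v v = c *\<^sub>R v}"

definition S_neq :: "(real^'n^'n) set" where
  "S_neq = {S. symmetric_mat S \<and> card (eigenvalues S) = CARD('n)}"

definition orthonormal_basis :: "('n \<Rightarrow> real^'n) \<Rightarrow> bool" where
  "orthonormal_basis b \<longleftrightarrow> (\<forall>i j. b i \<bullet> b j = (if i = j then 1 else 0))"

definition eigenbasis :: "real^'n^'n \<Rightarrow> ('n \<Rightarrow> real^'n) \<Rightarrow> bool" where
  "eigenbasis S b \<longleftrightarrow> orthonormal_basis b \<and> (\<forall>i. \<exists>c. S *v b i = c *\<^sub>R b i)"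

definition L_invar :: "('n \<Rightarrow> real^'n) \<Rightarrow> (real^'n^'n) set" where
  "L_invar b = {L. skew_mat L \<and>
     (\<exists>J. J \<noteq> {} \<and> J \<noteq> UNIV \<and> (\<forall>x \<in> span (b ` J). L *v x \<in> span (b ` J)))}"

text \<open>l(S) = so(n) minus L_invar(b) for an orthonormal eigenbasis b of S.
  (For S in S_neq the eigenbasis is unique up to signs/order, so the choice is irrelevant.)\<close>
definition l_set :: "real^'n^'n \<Rightarrow> (real^'n^'n) set" where
  "l_set S = {L. skew_mat L \<and> L \<notin> L_invar (SOME b. eigenbasis S b)}"

definition M_set :: "(real^'n^'n) set" where
  "M_set = {S + L | S L. S \<in> S_neq \<and> L \<in> l_set S}"

definition G_set :: "real^'n^'n \<Rightarrow> (real^'n^'n) set" where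
  "G_set P = {Q. orthogonal_matrix Q \<and> Q ** P = P ** Q}"

definition meager :: "'a::topological_space set \<Rightarrow> bool" where
  "meager A \<longleftrightarrow> (\<exists>F :: nat \<Rightarrow> 'a set. (\<forall>k. interior (closure (F k)) = {}) \<and> A \<subseteq> (\<Union>k. F k))"

end

theory Submission
  imports Defs
begin

lemma sym_inner:
  assumes "symmetric_mat S"
  shows "(S *v x) \<bullet> y = x \<bullet> (S *v y)"
proof -
  have "x \<bullet> (S *v y) = (x v* S) \<bullet> y" by (simp add: dot_lmul_matrix)
  also have "x v* S = transpose S *v x" by simp
  also have "transpose S = S" using assms by (simp add: symmetric_mat_def)
  finally show ?thesis by simp
qed

lemma quad_nonpos_zero:
  fixes a b :: real
  assumes "\<And>t. 2*t*a + t^2*b \<le> 0" "a \<ge> 0"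
  shows "a = 0"
proof (rule ccontr)
  assume "a \<noteq> 0" then have a: "a > 0" using assms(2) by simp
  define t where "t = a / (\<bar>b\<bar> + 1)"
  have t: "t > 0" using a by (simp add: t_def)
  have "t * \<bar>b\<bar> < a" using a by (simp add: t_def field_simps)
  then have 1: "t*(t*\<bar>b\<bar>) < t*a" using t by simp
  have 2: "t^2*b \<ge> t^2*(-\<bar>b\<bar>)" by (rule mult_left_mono) auto
  have 3: "t^2*(-\<bar>b\<bar>) = - (t*(t*\<bar>b\<bar>))" by (simp add: power2_eq_square)
  have 4: "t*a > 0" using t a by simp
  have "2*t*a + t^2*b \<le> 0" by (rule assms(1))
  then show False using 1 2 3 4 by linarith
qed

lemma eigvec_exists_orth:
  fixes S :: "real^'n^'n"
  assumes sym: "symmetric_mat S"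
    and eig: "\<forall>e\<in>E. \<exists>c. S *v e = c *\<^sub>R e"
    and nz: "y0 \<noteq> 0" "\<forall>e\<in>E. e \<bullet> y0 = 0"
  shows "\<exists>w. norm w = 1 \<and> (\<forall>e\<in>E. e \<bullet> w = 0) \<and> (\<exists>c. S *v w = c *\<^sub>R w)"
proof -
  define W where "W = {y. \<forall>e\<in>E. e \<bullet> y = 0}"
  define K where "K = W \<inter> sphere 0 1"
  have clW: "closed W" unfolding W_def
    by (simp add: Collect_ball_eq closed_INT closed_Collect_eq continuous_on_inner continuous_on_const continuous_on_id) 
  have cK: "compact K" unfolding K_def using clW by (simp add: compact_Int_closed closed_Int_compact)
  have "y0 /\<^sub>R norm y0 \<in> K" using nz by (auto simp: K_def W_def inner_commute)
  then have Kne: "K \<noteq> {}" by auto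
  have "continuous_on K (\<lambda>y. y \<bullet> (S *v y))"
    by (intro continuous_intros)
  then obtain w where w: "w \<in> K" and wmax: "\<And>z. z \<in> K \<Longrightarrow> z \<bullet> (S *v z) \<le> w \<bullet> (S *v w)"
    using continuous_attains_sup[OF cK Kne] by blast
  define \<mu> where "\<mu> = w \<bullet> (S *v w)"
  have wW: "w \<in> W" and wn: "norm w = 1" using w by (auto simp: K_def)
  have ww: "w \<bullet> w = 1" using wn by (simp add: norm_eq_1)
  have gen: "z \<bullet> (S *v z) \<le> \<mu> * (z \<bullet> z)" if "z \<in> W" for z
  proof (cases "z = 0")
    case True then show ?thesis by simp
  next
    case False
    have "z /\<^sub>R norm z \<in> K" using that False by (auto simp: K_def W_def)
    then have "(z /\<^sub>R norm z) \<bullet> (S *v (z /\<^sub>R norm z)) \<le> \<mu>" using wmax \<mu>_def by blast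
    then have "(z \<bullet> (S *v z)) / (norm z)^2 \<le> \<mu>"
      by (simp add: matrix_vector_mult_scaleR power2_eq_square divide_inverse mult_ac)
    then have "z \<bullet> (S *v z) \<le> \<mu> * (norm z)^2" using False by (simp add: divide_le_eq)
    then show ?thesis by (simp add: power2_norm_eq_inner)
  qed
  define y where "y = S *v w - \<mu> *\<^sub>R w"
  have SwW: "S *v w \<in> W"
  proof -
    { fix e assume e: "e \<in> E"
      then obtain c where c: "S *v e = c *\<^sub>R e" using eig by blast
      have "e \<bullet> (S *v w) = (S *v e) \<bullet> w" using sym_inner[OF sym] by simp
      also have "\<dots> = c * (e \<bullet> w)" using c by simp
      also have "e \<bullet> w = 0" using wW e by (simp add: W_def)
      finally have "e \<bullet> (S *v w) = 0" by simp }
    then show ?thesis by (simp add: W_def)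
  qed
  have yW: "y \<in> W" using SwW wW by (simp add: W_def y_def inner_diff_right)
  have wy: "w \<bullet> y = 0" by (simp add: y_def inner_diff_right \<mu>_def ww)
  have ySw: "y \<bullet> (S *v w) = y \<bullet> y"
  proof -
    have "y \<bullet> y = y \<bullet> (S *v w) - \<mu> * (y \<bullet> w)" by (simp add: y_def inner_diff_right)
    then show ?thesis using wy by (simp add: inner_commute)
  qed
  have Swy: "w \<bullet> (S *v y) = y \<bullet> y" using ySw sym_inner[OF sym, of y w] by (simp add: inner_commute)
  have "2*t*(y \<bullet> y) + t^2*(y \<bullet> (S *v y) - \<mu> * (y \<bullet> y)) \<le> 0" for t
  proof -
    have "w + t *\<^sub>R y \<in> W" using wW yW by (simp add: W_def inner_add_right)
    from gen[OF this] have
      "(w + t *\<^sub>R y) \<bullet> (S *v (w + t *\<^sub>R y)) \<le> \<mu> * ((w + t *\<^sub>R y) \<bullet> (w + t *\<^sub>R y))" .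
    moreover have "(w + t *\<^sub>R y) \<bullet> (S *v (w + t *\<^sub>R y)) = \<mu> + 2*t*(y \<bullet> y) + t^2 * (y \<bullet> (S *v y))"
      using ySw Swy by (simp add: matrix_vector_right_distrib matrix_vector_mult_scaleR inner_add_left inner_add_right \<mu>_def power2_eq_square algebra_simps)
    moreover have "(w + t *\<^sub>R y) \<bullet> (w + t *\<^sub>R y) = 1 + t^2 * (y \<bullet> y)"
      using ww wy by (simp add: inner_add_left inner_add_right power2_eq_square inner_commute)
    ultimately have "\<mu> + 2*t*(y \<bullet> y) + t^2 * (y \<bullet> (S *v y)) \<le> \<mu> * (1 + t^2 * (y \<bullet> y))" by simp
    then show ?thesis by (simp add: algebra_simps)
  qed
  then have "y \<bullet> y = 0" by (intro quad_nonpos_zero) auto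
  then have "S *v w = \<mu> *\<^sub>R w" by (simp add: y_def)
  then show ?thesis using wn wW by (auto simp: W_def)
qed

lemma spectral_aux:
  fixes S :: "real^'n^'n"
  assumes sym: "symmetric_mat S"
  shows "k \<le> CARD('n) \<Longrightarrow> \<exists>E::(real^'n) set. finite E \<and> card E = k \<and>
     (\<forall>e\<in>E. norm e = 1 \<and> (\<exists>c. S *v e = c *\<^sub>R e)) \<and> (\<forall>e\<in>E. \<forall>f\<in>E. e \<noteq> f \<longrightarrow> e \<bullet> f = 0)"
proof (induction k)
  case 0 then show ?case by (intro exI[of _ "{}"]) auto
next
  case (Suc k)
  then obtain E :: "(real^'n) set" where E: "finite E" "card E = k"
     "\<forall>e\<in>E. norm e = 1 \<and> (\<exists>c. S *v e = c *\<^sub>R e)" "\<forall>e\<in>E. \<forall>f\<in>E. e \<noteq> f \<longrightarrow> e \<bullet> f = 0"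
    by auto
  have "span E \<noteq> UNIV"
  proof
    assume "span E = UNIV"
    then have "dim (UNIV::(real^'n) set) \<le> card E" using dim_le_card[of UNIV E] E(1) by auto
    then show False using Suc.prems E(2) by simp
  qed
  then obtain a :: "real^'n" where a: "a \<noteq> 0" "\<forall>x \<in> span E. a \<bullet> x = 0"
    using span_not_UNIV_orthogonal by blast
  have "\<forall>e\<in>E. e \<bullet> a = 0" using a(2) span_base by (metis inner_commute)
  then obtain w where w: "norm w = 1" "\<forall>e\<in>E. e \<bullet> w = 0" "\<exists>c. S *v w = c *\<^sub>R w"
    using eigvec_exists_orth[OF sym, of E a] E(3) a(1) by blast
  have wE: "w \<notin> E"
  proof
    assume "w \<in> E" then have "w \<bullet> w = 0" using w(2) by blast
    then show False using w(1) by simp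
  qed
  show ?case
    apply (rule exI[of _ "insert w E"])
    using E w wE by (auto simp: inner_commute)
qed

lemma spectral:
  fixes S :: "real^'n^'n"
  assumes sym: "symmetric_mat S"
  shows "\<exists>B (lam::'n \<Rightarrow> real). B ** transpose B = mat 1 \<and> (\<forall>i. S *v (B$i) = lam i *\<^sub>R B$i)"
proof -
  obtain E :: "(real^'n) set" where E: "finite E" "card E = CARD('n)"
     "\<forall>e\<in>E. norm e = 1 \<and> (\<exists>c. S *v e = c *\<^sub>R e)" "\<forall>e\<in>E. \<forall>f\<in>E. e \<noteq> f \<longrightarrow> e \<bullet> f = 0"
    using spectral_aux[OF sym, of "CARD('n)"] by auto
  obtain f where f: "bij_betw f (UNIV::'n set) E"
    using finite_same_card_bij[of "UNIV::'n set" E] E(1,2) by auto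
  define B where "B = (\<chi> i. f i)"
  have fi: "f i \<in> E" for i using f by (auto simp: bij_betw_def)
  have finj: "f i = f j \<Longrightarrow> i = j" for i j using f by (auto simp: bij_betw_def inj_on_def)
  have "B ** transpose B = mat 1"
    unfolding matrix_mult_transpose_dot_row
    apply (simp add: vec_eq_iff mat_def row_def B_def)
    using E(3,4) fi finj by (auto simp: norm_eq_1) (metis fi finj)
  moreover have "\<forall>i. \<exists>c. S *v (B$i) = c *\<^sub>R B$i" using E(3) fi by (simp add: B_def)
  ultimately show ?thesis by metis
qed

definition ONB :: "real^'n^'n \<Rightarrow> bool" where
  "ONB B \<longleftrightarrow> B ** transpose B = mat 1"

lemma ONB_inner: "ONB (B::real^'n^'n) \<Longrightarrow> B$i \<bullet> B$j = (if i = j then 1 else 0)"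
proof -
  assume h: "ONB B"
  have "(B ** transpose B)$i$j = (mat 1::real^'n^'n)$i$j" using h by (simp add: ONB_def)
  then show ?thesis by (simp add: matrix_mult_transpose_dot_row row_def mat_def)
qed

lemma ONB_transpose: "ONB B \<Longrightarrow> transpose B ** B = mat 1"
  unfolding ONB_def using matrix_left_right_inverse by blast

lemma ONB_expand:
  assumes "ONB B"
  shows "y = (\<Sum>k\<in>UNIV. (B$k \<bullet> y) *\<^sub>R B$k)"
proof -
  have "y = transpose B *v (B *v y)"
    using ONB_transpose[OF assms] by (simp add: matrix_vector_mul_assoc)
  also have "\<dots> = (\<Sum>k\<in>UNIV. (B$k \<bullet> y) *\<^sub>R B$k)"
    by (simp add: vec_eq_iff matrix_vector_mult_def transpose_def inner_vec_def sum_component mult.commute)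
  finally show ?thesis .
qed

lemma ONB_nz: "ONB B \<Longrightarrow> B$i \<noteq> 0"
  using ONB_inner[of B i i] by auto

lemma ONB_zero: "ONB B \<Longrightarrow> (\<forall>k. B$k \<bullet> y = 0) \<Longrightarrow> y = 0"
  using ONB_expand[of B y] by simp

lemma ONB_span_iff:
  assumes "ONB B"
  shows "y \<in> span ((\<lambda>i. B$i) ` J) \<longleftrightarrow> (\<forall>j. j \<notin> J \<longrightarrow> B$j \<bullet> y = 0)"
proof
  assume y: "y \<in> span ((\<lambda>i. B$i) ` J)"
  show "\<forall>j. j \<notin> J \<longrightarrow> B$j \<bullet> y = 0"
  proof (intro allI impI)
    fix j assume j: "j \<notin> J"
    have "\<forall>x\<in>(\<lambda>i. B$i) ` J. orthogonal (B$j) x"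
      using ONB_inner[OF assms] j by (auto simp: orthogonal_def)
    then have "orthogonal (B$j) y" using orthogonal_to_span[OF y, of "B$j"] by blast
    then show "B$j \<bullet> y = 0" by (simp add: orthogonal_def)
  qed
next
  assume h: "\<forall>j. j \<notin> J \<longrightarrow> B$j \<bullet> y = 0"
  have "y = (\<Sum>k\<in>UNIV. (B$k \<bullet> y) *\<^sub>R B$k)" by (rule ONB_expand[OF assms])
  also have "\<dots> = (\<Sum>k\<in>J. (B$k \<bullet> y) *\<^sub>R B$k)"
    using h by (intro sum.mono_neutral_right) auto
  also have "\<dots> \<in> span ((\<lambda>i. B$i) ` J)"
    by (intro span_sum span_scale span_base) auto
  finally show "y \<in> span ((\<lambda>i. B$i) ` J)" .
qed

lemma ONB_invar_iff:
  assumes "ONB B"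
  shows "(\<forall>x \<in> span ((\<lambda>i. B$i) ` J). L *v x \<in> span ((\<lambda>i. B$i) ` J))
     \<longleftrightarrow> (\<forall>i\<in>J. \<forall>j. j \<notin> J \<longrightarrow> B$j \<bullet> (L *v B$i) = 0)"
proof
  assume h: "\<forall>x \<in> span ((\<lambda>i. B$i) ` J). L *v x \<in> span ((\<lambda>i. B$i) ` J)"
  show "\<forall>i\<in>J. \<forall>j. j \<notin> J \<longrightarrow> B$j \<bullet> (L *v B$i) = 0"
  proof (intro ballI allI impI)
    fix i j assume "i \<in> J" "j \<notin> J"
    then have "L *v B$i \<in> span ((\<lambda>i. B$i) ` J)" using h span_base by blast
    then show "B$j \<bullet> (L *v B$i) = 0" using ONB_span_iff[OF assms] \<open>j \<notin> J\<close> by blast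
  qed
next
  assume h: "\<forall>i\<in>J. \<forall>j. j \<notin> J \<longrightarrow> B$j \<bullet> (L *v B$i) = 0"
  have sub: "subspace {x. L *v x \<in> span ((\<lambda>i. B$i) ` J)}"
    unfolding subspace_def
    by (auto simp: matrix_vector_right_distrib matrix_vector_mult_scaleR span_add span_scale span_zero)
  have "(\<lambda>i. B$i) ` J \<subseteq> {x. L *v x \<in> span ((\<lambda>i. B$i) ` J)}"
    using h ONB_span_iff[OF assms] by auto
  then have "span ((\<lambda>i. B$i) ` J) \<subseteq> {x. L *v x \<in> span ((\<lambda>i. B$i) ` J)}"
    using sub span_minimal by blast
  then show "\<forall>x \<in> span ((\<lambda>i. B$i) ` J). L *v x \<in> span ((\<lambda>i. B$i) ` J)" by blast
qed

lemma orthonormal_basis_ONB: "orthonormal_basis b \<longleftrightarrow> ONB (\<chi> i. b i)"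
  unfolding orthonormal_basis_def ONB_def matrix_mult_transpose_dot_row
  by (auto simp: vec_eq_iff mat_def row_def)

lemma L_invar_ONB:
  assumes "ONB B"
  shows "L \<in> L_invar (\<lambda>i. B$i) \<longleftrightarrow> skew_mat L \<and>
     (\<exists>J. J \<noteq> {} \<and> J \<noteq> UNIV \<and> (\<forall>i\<in>J. \<forall>j. j \<notin> J \<longrightarrow> B$j \<bullet> (L *v B$i) = 0))"
  unfolding L_invar_def using ONB_invar_iff[OF assms] by auto

lemma eig_coeff:
  assumes sym: "symmetric_mat S" and eB: "\<forall>i. S *v (B$i) = lam i *\<^sub>R B$i"
    and ev: "S *v y = c *\<^sub>R y"
  shows "(lam k - c) * (B$k \<bullet> y) = 0"
proof -
  have "B$k \<bullet> (S *v y) = (S *v B$k) \<bullet> y" using sym_inner[OF sym] by simp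
  then have "c * (B$k \<bullet> y) = lam k * (B$k \<bullet> y)" using ev eB by simp
  then show ?thesis by (simp add: algebra_simps) auto
qed

lemma eigenvalues_range:
  assumes sym: "symmetric_mat S" and B: "ONB B" and eB: "\<forall>i. S *v (B$i) = lam i *\<^sub>R B$i"
  shows "eigenvalues S = range lam"
proof
  show "range lam \<subseteq> eigenvalues S"
    using eB ONB_nz[OF B] by (auto simp: eigenvalues_def)
  show "eigenvalues S \<subseteq> range lam"
  proof
    fix c assume "c \<in> eigenvalues S"
    then obtain y where y: "y \<noteq> 0" "S *v y = c *\<^sub>R y" by (auto simp: eigenvalues_def)
    then obtain k where "B$k \<bullet> y \<noteq> 0" using ONB_zero[OF B] by blast
    then have "c = lam k" using eig_coeff[OF sym eB y(2), of k] by simp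
    then show "c \<in> range lam" by simp
  qed
qed

lemma S_neq_iff_inj:
  fixes S :: "real^'n^'n"
  assumes sym: "symmetric_mat S" and B: "ONB B" and eB: "\<forall>i. S *v (B$i) = lam i *\<^sub>R B$i"
  shows "S \<in> S_neq \<longleftrightarrow> inj lam"
proof -
  have "card (range lam) = CARD('n) \<longleftrightarrow> inj lam"
    using inj_on_iff_eq_card[of "UNIV::'n set" lam] by simp
  then show ?thesis using eigenvalues_range[OF assms] sym by (simp add: S_neq_def)
qed

lemma eigenbasis_ONB:
  assumes "eigenbasis S b"
  shows "ONB (\<chi> i. b i) \<and> (\<exists>lam. \<forall>i. S *v ((\<chi> i. b i)$i) = lam i *\<^sub>R (\<chi> i. b i)$i)"
  using assms unfolding eigenbasis_def orthonormal_basis_ONB by (auto intro: choice)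

lemma ONB_eigenbasis:
  assumes "ONB B" "\<forall>i. S *v (B$i) = lam i *\<^sub>R B$i"
  shows "eigenbasis S (\<lambda>i. B$i)"
  using assms unfolding eigenbasis_def orthonormal_basis_ONB by auto

lemma eigenbasis_exists:
  fixes S :: "real^'n^'n"
  assumes "symmetric_mat S" shows "\<exists>b. eigenbasis S b"
proof -
  obtain B :: "real^'n^'n" and lam where "B ** transpose B = mat 1" "\<forall>i. S *v (B$i) = lam i *\<^sub>R B$i"
    using spectral[OF assms] by blast
  then have "eigenbasis S (\<lambda>i. B$i)" by (intro ONB_eigenbasis) (auto simp: ONB_def)
  then show ?thesis by blast
qed

lemma transfer_invar:
  assumes sym: "symmetric_mat S" and SN: "S \<in> S_neq"
    and B: "ONB B" and eB: "\<forall>i. S *v (B$i) = lam i *\<^sub>R B$i"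
    and B': "ONB B'" and eB': "\<forall>i. S *v (B'$i) = lam' i *\<^sub>R B'$i"
    and L: "L \<in> L_invar (\<lambda>i. B$i)"
  shows "L \<in> L_invar (\<lambda>i. B'$i)"
proof -
  have inj: "inj lam" using S_neq_iff_inj[OF sym B eB] SN by simp
  have rr: "range lam' = range lam"
    using eigenvalues_range[OF sym B eB] eigenvalues_range[OF sym B' eB'] by simp
  have "\<forall>j. \<exists>k. lam' j = lam k"
  proof
    fix j have "lam' j \<in> range lam" using rr by (metis rangeI)
    then show "\<exists>k. lam' j = lam k" by blast
  qed
  from choice[OF this] obtain \<sigma> where \<sigma>0: "\<forall>j. lam' j = lam (\<sigma> j)" by blast
  then have \<sigma>: "\<And>j. lam' j = lam (\<sigma> j)" by blast
  define co where "co j = B$(\<sigma> j) \<bullet> B'$j" for j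
  have coef0: "B$k \<bullet> B'$j = 0" if "k \<noteq> \<sigma> j" for k j
  proof -
    have "lam k \<noteq> lam' j" using inj that \<sigma> by (simp add: inj_eq)
    then show ?thesis using eig_coeff[OF sym eB eB'[rule_format, of j], of k] by simp
  qed
  have rep: "B'$j = co j *\<^sub>R B$(\<sigma> j)" for j
  proof -
    have "B'$j = (\<Sum>k\<in>UNIV. (B$k \<bullet> B'$j) *\<^sub>R B$k)" by (rule ONB_expand[OF B])
    also have "\<dots> = (\<Sum>k\<in>{\<sigma> j}. (B$k \<bullet> B'$j) *\<^sub>R B$k)"
      using coef0 by (intro sum.mono_neutral_right) auto
    finally show ?thesis by (simp add: co_def)
  qed
  have cnz: "co j \<noteq> 0" for j
  proof
    assume h: "co j = 0"
    have "B'$j = co j *\<^sub>R B$(\<sigma> j)" by (rule rep)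
    also have "\<dots> = 0" using h by simp
    finally show False using ONB_nz[OF B', of j] by simp
  qed
  have injs: "inj \<sigma>"
  proof (rule injI)
    fix j j' assume e: "\<sigma> j = \<sigma> j'"
    show "j = j'"
    proof (rule ccontr)
      assume "j \<noteq> j'"
      then have "B'$j \<bullet> B'$j' = 0" using ONB_inner[OF B'] by simp
      moreover have "B'$j \<bullet> B'$j' = co j * co j'"
        using rep[of j] rep[of j'] e ONB_inner[OF B, of "\<sigma> j'" "\<sigma> j'"]
        by simp
      ultimately show False using cnz by simp
    qed
  qed
  then have "surj \<sigma>" using finite_UNIV_inj_surj[of \<sigma>] by simp
  then have bij: "bij \<sigma>" using injs by (simp add: bij_def)
  have "skew_mat L \<and> (\<exists>J. J \<noteq> {} \<and> J \<noteq> UNIV \<and> (\<forall>i\<in>J. \<forall>j. j \<notin> J \<longrightarrow> B$j \<bullet> (L *v B$i) = 0))"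
    using L L_invar_ONB[OF B] by simp
  then obtain J where J: "skew_mat L" "J \<noteq> {}" "J \<noteq> UNIV"
      "\<forall>i\<in>J. \<forall>j. j \<notin> J \<longrightarrow> B$j \<bullet> (L *v B$i) = 0"
    by blast
  define J' where "J' = \<sigma> -` J"
  have J'1: "J' \<noteq> {}"
  proof -
    obtain x where "x \<in> J" using J(2) by blast
    moreover obtain y where "\<sigma> y = x" using \<open>surj \<sigma>\<close> by (metis surjD)
    ultimately have "y \<in> J'" by (simp add: J'_def)
    then show ?thesis by blast
  qed
  have J'2: "J' \<noteq> UNIV"
  proof -
    obtain x where "x \<notin> J" using J(3) by blast
    moreover obtain y where "\<sigma> y = x" using \<open>surj \<sigma>\<close> by (metis surjD)
    ultimately have "y \<notin> J'" by (simp add: J'_def)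
    then show ?thesis by blast
  qed
  have "\<forall>i\<in>J'. \<forall>j. j \<notin> J' \<longrightarrow> B'$j \<bullet> (L *v B'$i) = 0"
  proof (intro ballI allI impI)
    fix i j assume i: "i \<in> J'" and j: "j \<notin> J'"
    have "B$(\<sigma> j) \<bullet> (L *v B$(\<sigma> i)) = 0" using J(4) i j by (auto simp: J'_def)
    then show "B'$j \<bullet> (L *v B'$i) = 0"
      using rep[of i] rep[of j] by (simp add: matrix_vector_mult_scaleR)
  qed
  then show ?thesis unfolding L_invar_ONB[OF B'] using J(1) J'1 J'2 by (intro conjI exI[of _ J']) simp_all
qed

lemma sym_entry: "symmetric_mat S \<Longrightarrow> S$j$i = S$i$j"
proof -
  assume "symmetric_mat S"
  then have "(transpose S)$i$j = S$i$j" by (simp add: symmetric_mat_def)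
  then show ?thesis by (simp add: transpose_def)
qed

lemma skew_entry: "skew_mat L \<Longrightarrow> L$j$i = - L$i$j"
proof -
  assume "skew_mat L"
  then have "(transpose L)$i$j = (- L)$i$j" by (simp add: skew_mat_def)
  then show ?thesis by (simp add: transpose_def)
qed

lemma sym_skew_unique:
  assumes "symmetric_mat S" "skew_mat L" "symmetric_mat S'" "skew_mat L'" "S + L = S' + L'"
  shows "S = S' \<and> L = L'"
proof -
  have "S$i$j = S'$i$j \<and> L$i$j = L'$i$j" for i j
  proof -
    have "(S+L)$i$j = (S'+L')$i$j" "(S+L)$j$i = (S'+L')$j$i" using assms(5) by simp_all
    then have 1: "S$i$j + L$i$j = S'$i$j + L'$i$j" and 2: "S$j$i + L$j$i = S'$j$i + L'$j$i" by simp_all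
    show ?thesis using 1 2 sym_entry[OF assms(1), of j i] sym_entry[OF assms(3), of j i]
       skew_entry[OF assms(2), of j i] skew_entry[OF assms(4), of j i] by linarith
  qed
  then show ?thesis by (simp add: vec_eq_iff)
qed

lemma continuous_on_mmult[continuous_intros]:
  fixes f g :: "'a::topological_space \<Rightarrow> real^'n^'n"
  assumes "continuous_on S f" "continuous_on S g"
  shows "continuous_on S (\<lambda>x. f x ** g x)"
  unfolding matrix_matrix_mult_def by (intro continuous_intros assms)

lemma continuous_on_mvmult[continuous_intros]:
  fixes f :: "'a::topological_space \<Rightarrow> real^'n^'n" and g :: "'a \<Rightarrow> real^'n"
  assumes "continuous_on S f" "continuous_on S g"
  shows "continuous_on S (\<lambda>x. f x *v g x)"
  unfolding matrix_vector_mult_def by (intro continuous_intros assms)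

lemma continuous_on_transpose[continuous_intros]:
  fixes f :: "'a::topological_space \<Rightarrow> real^'n^'n"
  assumes "continuous_on S f"
  shows "continuous_on S (\<lambda>x. transpose (f x))"
  unfolding transpose_def by (intro continuous_intros assms)

definition msym :: "real^'n^'n \<Rightarrow> real^'n^'n" where
  "msym X = (1/2) *\<^sub>R (X + transpose X)"
definition mskw :: "real^'n^'n \<Rightarrow> real^'n^'n" where
  "mskw X = (1/2) *\<^sub>R (X - transpose X)"

lemma msym_sym: "symmetric_mat (msym X)"
  by (simp add: symmetric_mat_def msym_def transpose_scalar) (simp add: transpose_def vec_eq_iff)

lemma mskw_skew: "skew_mat (mskw X)"
  by (simp add: skew_mat_def mskw_def transpose_scalar) (simp add: transpose_def vec_eq_iff field_simps)

lemma msym_skwp: "X = msym X + mskw X"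
  by (simp add: msym_def mskw_def vec_eq_iff) (simp add: field_simps)

lemma sym_skw_parts:
  assumes "symmetric_mat S" "skew_mat L"
  shows "msym (S + L) = S \<and> mskw (S + L) = L"
  using sym_skew_unique[OF msym_sym[of "S+L"] mskw_skew[of "S+L"] assms] msym_skwp[of "S+L"] by simp

definition Jcond :: "real^'n^'n \<Rightarrow> real^'n^'n \<Rightarrow> bool" where
  "Jcond B L \<longleftrightarrow> (\<exists>J. J \<noteq> {} \<and> J \<noteq> UNIV \<and> (\<forall>i\<in>J. \<forall>j. j \<notin> J \<longrightarrow> B$j \<bullet> (L *v B$i) = 0))"

lemma SOME_basis:
  fixes S :: "real^'n^'n"
  assumes "symmetric_mat S"
  obtains B0 lam0 where "ONB B0" "\<forall>i. S *v (B0$i) = lam0 i *\<^sub>R B0$i"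
    "(SOME b. eigenbasis S b) = (\<lambda>i. B0$i)"
proof -
  define b where "b = (SOME b. eigenbasis S b)"
  have "eigenbasis S b" unfolding b_def using eigenbasis_exists[OF assms] by (rule someI_ex)
  from eigenbasis_ONB[OF this] obtain lam where
     "ONB (\<chi> i. b i)" "\<forall>i. S *v ((\<chi> i. b i)$i) = lam i *\<^sub>R (\<chi> i. b i)$i" by blast
  moreover have "(\<lambda>i. (\<chi> i. b i)$i) = b" by simp
  ultimately show ?thesis using that b_def by metis
qed

lemma M_nec:
  fixes X :: "real^'n^'n"
  assumes X: "X \<in> M_set" and B: "ONB B" and eB: "\<forall>i. msym X *v (B$i) = lam i *\<^sub>R B$i"
  shows "inj lam \<and> \<not> Jcond B (mskw X)"
proof -
  from X obtain S L where SL: "X = S + L" "S \<in> S_neq" "L \<in> l_set S" by (auto simp: M_set_def)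
  have sS: "symmetric_mat S" using SL(2) by (simp add: S_neq_def)
  have sL: "skew_mat L" using SL(3) by (simp add: l_set_def)
  have eq: "msym X = S" "mskw X = L" using sym_skw_parts[OF sS sL] SL(1) by auto
  have eBS: "\<forall>i. S *v (B$i) = lam i *\<^sub>R B$i" using eB eq by simp
  have inj: "inj lam" using S_neq_iff_inj[OF sS B eBS] SL(2) by simp
  moreover have "\<not> Jcond B (mskw X)"
  proof
    assume "Jcond B (mskw X)"
    then have "L \<in> L_invar (\<lambda>i. B$i)" using L_invar_ONB[OF B] sL eq by (simp add: Jcond_def)
    moreover obtain B0 lam0 where B0: "ONB B0" "\<forall>i. S *v (B0$i) = lam0 i *\<^sub>R B0$i"
      "(SOME b. eigenbasis S b) = (\<lambda>i. B0$i)" using SOME_basis[OF sS] by blast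
    ultimately have "L \<in> L_invar (\<lambda>i. B0$i)"
      using transfer_invar[OF sS SL(2) B eBS B0(1,2)] by simp
    then show False using SL(3) B0(3) by (simp add: l_set_def)
  qed
  ultimately show ?thesis by simp
qed

lemma M_suff:
  fixes X :: "real^'n^'n"
  assumes B: "ONB B" and eB: "\<forall>i. msym X *v (B$i) = lam i *\<^sub>R B$i"
    and inj: "inj lam" and nJ: "\<not> Jcond B (mskw X)"
  shows "X \<in> M_set"
proof -
  define S where "S = msym X"
  define L where "L = mskw X"
  have sS: "symmetric_mat S" and sL: "skew_mat L" by (simp_all add: S_def L_def msym_sym mskw_skew)
  have eBS: "\<forall>i. S *v (B$i) = lam i *\<^sub>R B$i" using eB by (simp add: S_def)
  have SN: "S \<in> S_neq" using S_neq_iff_inj[OF sS B eBS] inj by simp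
  have "L \<in> l_set S"
  proof -
    obtain B0 lam0 where B0: "ONB B0" "\<forall>i. S *v (B0$i) = lam0 i *\<^sub>R B0$i"
      "(SOME b. eigenbasis S b) = (\<lambda>i. B0$i)" using SOME_basis[OF sS] by blast
    have "L \<notin> L_invar (\<lambda>i. B0$i)"
    proof
      assume "L \<in> L_invar (\<lambda>i. B0$i)"
      then have "L \<in> L_invar (\<lambda>i. B$i)"
        using transfer_invar[OF sS SN B0(1,2) B eBS] by simp
      then show False using nJ L_invar_ONB[OF B] by (simp add: Jcond_def L_def)
    qed
    then show ?thesis using sL B0(3) by (simp add: l_set_def)
  qed
  moreover have "X = S + L" using msym_skwp by (simp add: S_def L_def)
  ultimately show ?thesis using SN unfolding M_set_def by blast
qed

definition Orth :: "(real^'n^'n) set" where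
  "Orth = {B. B ** transpose B = mat 1}"

lemma compact_Orth: "compact (Orth :: (real^'n^'n) set)"
proof -
  have "closed (Orth :: (real^'n^'n) set)" unfolding Orth_def
    by (intro closed_Collect_eq continuous_intros)
  moreover have "bounded (Orth :: (real^'n^'n) set)"
    unfolding bounded_iff
  proof (intro exI ballI)
    fix B :: "real^'n^'n" assume "B \<in> Orth"
    then have B: "ONB B" by (simp add: Orth_def ONB_def)
    have n1: "norm (B$i) = 1" for i using ONB_inner[OF B, of i i] by (simp add: norm_eq_1)
    have "norm B = L2_set (\<lambda>i. norm (B$i)) UNIV" by (simp add: norm_vec_def)
    also have "\<dots> \<le> sum (\<lambda>i. norm (B$i)) UNIV" by (rule L2_set_le_sum) simp
    also have "\<dots> = real CARD('n)" using n1 by simp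
    finally show "norm B \<le> real CARD('n)" .
  qed
  ultimately show ?thesis by (simp add: compact_eq_bounded_closed)
qed

definition Tset :: "((real^'n^'n) \<times> (real^'n^'n)) set" where
  "Tset = {p. (\<forall>i. msym (snd p) *v (fst p $ i) = ((fst p $ i) \<bullet> (msym (snd p) *v (fst p $ i))) *\<^sub>R (fst p $ i))
      \<and> ((\<exists>i j. i \<noteq> j \<and> (fst p $ i) \<bullet> (msym (snd p) *v (fst p $ i)) = (fst p $ j) \<bullet> (msym (snd p) *v (fst p $ j)))
          \<or> Jcond (fst p) (mskw (snd p)))}"

lemma continuous_on_symp[continuous_intros]:
  "continuous_on S f \<Longrightarrow> continuous_on S (\<lambda>x. msym (f x :: real^'n^'n))"
  unfolding msym_def by (intro continuous_intros)

lemma continuous_on_skwp[continuous_intros]: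
  "continuous_on S f \<Longrightarrow> continuous_on S (\<lambda>x. mskw (f x :: real^'n^'n))"
  unfolding mskw_def by (intro continuous_intros)

lemma closed_Tset: "closed (Tset :: ((real^'n^'n) \<times> (real^'n^'n)) set)"
proof -
  define h where "h i p = (fst p $ i) \<bullet> (msym (snd p) *v (fst p $ i))" for i and p :: "(real^'n^'n) \<times> (real^'n^'n)"
  have ch: "continuous_on UNIV (h i)" for i unfolding h_def by (intro continuous_intros)
  have A: "closed {p::(real^'n^'n) \<times> (real^'n^'n). \<forall>i. msym (snd p) *v (fst p $ i) = h i p *\<^sub>R (fst p $ i)}"
  proof (rule closed_Collect_all, rule closed_Collect_eq)
    fix i
    show "continuous_on UNIV (\<lambda>p::(real^'n^'n) \<times> (real^'n^'n). msym (snd p) *v (fst p $ i))"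
      by (intro continuous_intros)
    show "continuous_on UNIV (\<lambda>p::(real^'n^'n) \<times> (real^'n^'n). h i p *\<^sub>R (fst p $ i))"
      by (intro continuous_on_scaleR ch continuous_intros)
  qed
  have "{p::(real^'n^'n) \<times> (real^'n^'n). \<exists>i j. i \<noteq> j \<and> h i p = h j p} =
        (\<Union>i\<in>UNIV. \<Union>j\<in>UNIV - {i}. {p. h i p = h j p})" by fastforce
  moreover have "closed (\<Union>i\<in>UNIV. \<Union>j\<in>UNIV - {i}. {p::(real^'n^'n) \<times> (real^'n^'n). h i p = h j p})"
    by (intro closed_UN ballI closed_Collect_eq ch) simp_all
  ultimately have C: "closed {p::(real^'n^'n) \<times> (real^'n^'n). \<exists>i j. i \<noteq> j \<and> h i p = h j p}" by simp
  have cE: "continuous_on UNIV (\<lambda>p::(real^'n^'n) \<times> (real^'n^'n). (fst p $ j) \<bullet> (mskw (snd p) *v (fst p $ i)))" for i j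
    by (intro continuous_intros)
  have cl0: "closed {p::(real^'n^'n) \<times> (real^'n^'n). (fst p $ j) \<bullet> (mskw (snd p) *v (fst p $ i)) = 0}" for i j
    using closed_Collect_eq[OF cE continuous_on_const] .
  have fin: "finite {J. J \<noteq> {} \<and> J \<noteq> (UNIV::'n set)}" by (rule finite_subset[OF subset_UNIV]) simp
  have "{p::(real^'n^'n) \<times> (real^'n^'n). Jcond (fst p) (mskw (snd p))} =
     (\<Union>J\<in>{J. J \<noteq> {} \<and> J \<noteq> UNIV}. \<Inter>i\<in>J. \<Inter>j\<in>UNIV - J. {p. (fst p $ j) \<bullet> (mskw (snd p) *v (fst p $ i)) = 0})"
  proof (intro set_eqI iffI)
    fix p :: "(real^'n^'n) \<times> (real^'n^'n)"
    assume "p \<in> {p. Jcond (fst p) (mskw (snd p))}"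
    then obtain J where J: "J \<noteq> {}" "J \<noteq> UNIV" "\<forall>i\<in>J. \<forall>j. j \<notin> J \<longrightarrow> (fst p $ j) \<bullet> (mskw (snd p) *v (fst p $ i)) = 0"
      unfolding Jcond_def by blast
    show "p \<in> (\<Union>J\<in>{J. J \<noteq> {} \<and> J \<noteq> UNIV}. \<Inter>i\<in>J. \<Inter>j\<in>UNIV - J. {p. (fst p $ j) \<bullet> (mskw (snd p) *v (fst p $ i)) = 0})"
    proof (rule UN_I[of J])
      show "J \<in> {J. J \<noteq> {} \<and> J \<noteq> UNIV}" using J by simp
      show "p \<in> (\<Inter>i\<in>J. \<Inter>j\<in>UNIV - J. {p. (fst p $ j) \<bullet> (mskw (snd p) *v (fst p $ i)) = 0})"
        using J(3) by (intro INT_I) simp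
    qed
  next
    fix p :: "(real^'n^'n) \<times> (real^'n^'n)"
    assume "p \<in> (\<Union>J\<in>{J. J \<noteq> {} \<and> J \<noteq> UNIV}. \<Inter>i\<in>J. \<Inter>j\<in>UNIV - J. {p. (fst p $ j) \<bullet> (mskw (snd p) *v (fst p $ i)) = 0})"
    then obtain J where J: "J \<noteq> {}" "J \<noteq> UNIV" and
      "p \<in> (\<Inter>i\<in>J. \<Inter>j\<in>UNIV - J. {p. (fst p $ j) \<bullet> (mskw (snd p) *v (fst p $ i)) = 0})" by blast
    then have "\<forall>i\<in>J. \<forall>j. j \<notin> J \<longrightarrow> (fst p $ j) \<bullet> (mskw (snd p) *v (fst p $ i)) = 0" by blast
    then show "p \<in> {p. Jcond (fst p) (mskw (snd p))}" using J unfolding Jcond_def by blast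
  qed
  moreover have "closed (\<Union>J\<in>{J. J \<noteq> {} \<and> J \<noteq> (UNIV::'n set)}. \<Inter>i\<in>J. \<Inter>j\<in>UNIV - J.
        {p::(real^'n^'n) \<times> (real^'n^'n). (fst p $ j) \<bullet> (mskw (snd p) *v (fst p $ i)) = 0})"
    using fin by (intro closed_UN ballI closed_INT cl0)
  ultimately have D: "closed {p::(real^'n^'n) \<times> (real^'n^'n). Jcond (fst p) (mskw (snd p))}" by simp
  have eqT: "Tset = {p::(real^'n^'n) \<times> (real^'n^'n). \<forall>i. msym (snd p) *v (fst p $ i) = h i p *\<^sub>R (fst p $ i)} \<inter>
     ({p. \<exists>i j. i \<noteq> j \<and> h i p = h j p} \<union> {p. Jcond (fst p) (mskw (snd p))})"
    unfolding Tset_def h_def by (simp only: Collect_conj_eq Collect_disj_eq)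
  show ?thesis unfolding eqT by (intro closed_Int closed_Un A C D)
qed

lemma Tset_mem:
  "(B, X) \<in> Tset \<longleftrightarrow> (\<forall>i. msym X *v (B $ i) = ((B $ i) \<bullet> (msym X *v (B $ i))) *\<^sub>R (B $ i))
      \<and> ((\<exists>i j. i \<noteq> j \<and> (B $ i) \<bullet> (msym X *v (B $ i)) = (B $ j) \<bullet> (msym X *v (B $ j)))
          \<or> Jcond B (mskw X))"
  unfolding Tset_def mem_Collect_eq fst_conv snd_conv by (rule refl)

lemma compl_M: "- (M_set :: (real^'n^'n) set) = {X. \<exists>B. B \<in> Orth \<and> (B, X) \<in> Tset}"
proof (intro set_eqI iffI)
  fix X :: "real^'n^'n" assume X: "X \<in> - M_set"
  obtain B :: "real^'n^'n" and lam where B: "B ** transpose B = mat 1"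
    and eB: "\<forall>i. msym X *v (B$i) = lam i *\<^sub>R B$i"
    using spectral[OF msym_sym[of X]] by blast
  have oB: "ONB B" using B by (simp add: ONB_def)
  have lam: "lam i = B$i \<bullet> (msym X *v B$i)" for i
  proof -
    have "B$i \<bullet> (msym X *v B$i) = B$i \<bullet> (lam i *\<^sub>R B$i)" using eB by metis
    also have "\<dots> = lam i" using ONB_inner[OF oB, of i i] by simp
    finally show ?thesis by simp
  qed
  have eB2: "\<forall>i. msym X *v B$i = (B$i \<bullet> (msym X *v B$i)) *\<^sub>R B$i"
    using eB unfolding lam .
  have nn: "\<not> (inj lam \<and> \<not> Jcond B (mskw X))"
  proof
    assume "inj lam \<and> \<not> Jcond B (mskw X)"
    then have "X \<in> M_set" using M_suff[OF oB eB] by blast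
    then show False using X by simp
  qed
  have "(\<exists>i j. i \<noteq> j \<and> lam i = lam j) \<or> Jcond B (mskw X)"
  proof (cases "Jcond B (mskw X)")
    case True then show ?thesis by simp
  next
    case False
    then have "\<not> inj lam" using nn by simp
    then show ?thesis unfolding inj_def by blast
  qed
  then have "(\<exists>i j. i \<noteq> j \<and> (B $ i) \<bullet> (msym X *v (B $ i)) = (B $ j) \<bullet> (msym X *v (B $ j))) \<or> Jcond B (mskw X)"
    unfolding lam .
  then have "(B, X) \<in> Tset" unfolding Tset_mem using eB2 by blast
  moreover have "B \<in> Orth" using B by (simp add: Orth_def)
  ultimately show "X \<in> {X. \<exists>B. B \<in> Orth \<and> (B, X) \<in> Tset}" by blast
next
  fix X :: "real^'n^'n" assume "X \<in> {X. \<exists>B. B \<in> Orth \<and> (B, X) \<in> Tset}"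
  then obtain B where B: "B \<in> Orth" "(B, X) \<in> Tset" by blast
  have oB: "ONB B" using B by (simp add: Orth_def ONB_def)
  define lam where "lam i = B$i \<bullet> (msym X *v B$i)" for i
  have T: "(\<forall>i. msym X *v (B $ i) = ((B $ i) \<bullet> (msym X *v (B $ i))) *\<^sub>R (B $ i))
      \<and> ((\<exists>i j. i \<noteq> j \<and> (B $ i) \<bullet> (msym X *v (B $ i)) = (B $ j) \<bullet> (msym X *v (B $ j)))
          \<or> Jcond B (mskw X))" using B(2) unfolding Tset_mem .
  then have eB: "\<forall>i. msym X *v (B$i) = lam i *\<^sub>R B$i" and
     h: "(\<exists>i j. i \<noteq> j \<and> lam i = lam j) \<or> Jcond B (mskw X)"
    unfolding lam_def[symmetric] by blast+
  have "\<not> (inj lam \<and> \<not> Jcond B (mskw X))"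
  proof
    assume "inj lam \<and> \<not> Jcond B (mskw X)"
    with h show False unfolding inj_def by blast
  qed
  then show "X \<in> - M_set" using M_nec[OF _ oB eB] by blast
qed

lemma open_M: "open (M_set :: (real^'n^'n) set)"
proof -
  have "closed {X. \<exists>B. B \<in> (Orth :: (real^'n^'n) set) \<and> (B, X) \<in> Tset}"
    by (rule closed_compact_projection[OF compact_Orth closed_Tset])
  then show ?thesis unfolding open_closed compl_M .
qed

definition outer :: "real^'n \<Rightarrow> real^'n \<Rightarrow> real^'n^'n" where
  "outer u v = (\<chi> i j. u$i * v$j)"

lemma outer_mv: "outer u v *v x = (v \<bullet> x) *\<^sub>R u"
  by (simp add: outer_def matrix_vector_mult_def vec_eq_iff inner_vec_def sum_distrib_left mult_ac)

lemma transpose_outer: "transpose (outer u v) = outer v u"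
  by (simp add: outer_def transpose_def vec_eq_iff)

lemma transpose_sum: "transpose (\<Sum>k\<in>A. f k) = (\<Sum>k\<in>A. transpose (f k :: real^'n^'n))"
  by (induction A rule: infinite_finite_induct) (auto simp: transpose_def vec_eq_iff sum_component)

lemma transpose_add: "transpose (A + B :: real^'n^'n) = transpose A + transpose B"
  by (simp add: transpose_def vec_eq_iff)

lemma transpose_diff: "transpose (A - B :: real^'n^'n) = transpose A - transpose B"
  by (simp add: transpose_def vec_eq_iff)

lemma transpose_minus: "transpose (- A :: real^'n^'n) = - transpose A"
  by (simp add: transpose_def vec_eq_iff)

lemma sum_mv: "(\<Sum>k\<in>A. f k) *v x = (\<Sum>k\<in>A. f k *v (x::real^'n))"
  by (induction A rule: infinite_finite_induct) (auto simp: matrix_vector_mult_add_rdistrib)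

lemma scaleR_mv: "(c *\<^sub>R A) *v x = c *\<^sub>R (A *v (x::real^'n))"
  by (simp add: vec_eq_iff matrix_vector_mult_def sum_distrib_left mult_ac)

lemma avoid_finite:
  fixes F :: "real set"
  assumes "finite F" "0 < a"
  shows "\<exists>d. 0 < d \<and> d < a \<and> d \<notin> F"
proof -
  have "infinite {0<..<a}" using assms(2) by simp
  then have "\<not> {0<..<a} \<subseteq> F" using assms(1) finite_subset by blast
  then show ?thesis by auto
qed

lemma dense_M: "closure (M_set :: (real^'n^'n) set) = UNIV"
proof -
  { fix X :: "real^'n^'n" and \<epsilon> :: real assume \<epsilon>: "\<epsilon> > 0"
    define S where "S = msym X"
    define L where "L = mskw X"
    have sS: "symmetric_mat S" and sL: "skew_mat L" by (simp_all add: S_def L_def msym_sym mskw_skew)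
    obtain B :: "real^'n^'n" and lam where B0: "B ** transpose B = mat 1"
      and eB: "\<forall>i. S *v (B$i) = lam i *\<^sub>R B$i"
      using spectral[OF sS] by blast
    have B: "ONB B" using B0 by (simp add: ONB_def)
    obtain r :: "'n \<Rightarrow> nat" where r: "inj r"
      using ex_bij_betw_finite_nat[of "UNIV::'n set"] by (auto simp: bij_betw_def)
    define \<nu> where "\<nu> i = real (r i)" for i
    define c where "c a b = (if r a < r b then 1 else (0::real))" for a b
    define D1 where "D1 = (\<Sum>k\<in>UNIV. \<nu> k *\<^sub>R outer (B$k) (B$k))"
    define D2 where "D2 = (\<Sum>a\<in>UNIV. \<Sum>b\<in>UNIV. c a b *\<^sub>R (outer (B$a) (B$b) - outer (B$b) (B$a)))"
    have sD1: "symmetric_mat D1"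
      by (simp add: symmetric_mat_def D1_def transpose_sum transpose_scalar transpose_outer)
    have sD2: "skew_mat D2"
    proof -
      have "transpose D2 = (\<Sum>a\<in>UNIV. \<Sum>b\<in>UNIV. c a b *\<^sub>R (outer (B$b) (B$a) - outer (B$a) (B$b)))"
        by (simp add: D2_def transpose_sum transpose_scalar transpose_diff transpose_outer)
      also have "\<dots> = - D2"
        unfolding D2_def sum_negf[symmetric] by (intro sum.cong refl) (simp add: scaleR_diff_right)
      finally show ?thesis by (simp add: skew_mat_def)
    qed
    have D1v: "D1 *v B$j = \<nu> j *\<^sub>R B$j" for j
    proof -
      have "D1 *v B$j = (\<Sum>k\<in>UNIV. (\<nu> k * (B$k \<bullet> B$j)) *\<^sub>R B$k)"
        by (simp add: D1_def sum_mv matrix_vector_mult_scaleR scaleR_mv outer_mv)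
      also have "\<dots> = (\<Sum>k\<in>{j}. (\<nu> k * (B$k \<bullet> B$j)) *\<^sub>R B$k)"
        using ONB_inner[OF B] by (intro sum.mono_neutral_right) auto
      finally show ?thesis using ONB_inner[OF B, of j j] by simp
    qed
    have D2e: "B$j \<bullet> (D2 *v B$i) = c j i - c i j" for i j
    proof -
      have "D2 *v B$i = (\<Sum>a\<in>UNIV. \<Sum>b\<in>UNIV. c a b *\<^sub>R ((B$b \<bullet> B$i) *\<^sub>R B$a - (B$a \<bullet> B$i) *\<^sub>R B$b))"
        by (simp add: D2_def sum_mv scaleR_mv matrix_vector_mult_diff_rdistrib outer_mv)
      then have "B$j \<bullet> (D2 *v B$i) = (\<Sum>a\<in>UNIV. \<Sum>b\<in>UNIV. c a b * ((B$b \<bullet> B$i) * (B$j \<bullet> B$a)) - c a b * ((B$a \<bullet> B$i) * (B$j \<bullet> B$b)))"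
        by (simp add: inner_sum_right inner_diff_right right_diff_distrib)
      also have "\<dots> = (\<Sum>a\<in>UNIV. \<Sum>b\<in>UNIV. c a b * ((B$b \<bullet> B$i) * (B$j \<bullet> B$a))) - (\<Sum>a\<in>UNIV. \<Sum>b\<in>UNIV. c a b * ((B$a \<bullet> B$i) * (B$j \<bullet> B$b)))"
        by (simp add: sum_subtractf)
      also have "(\<Sum>a\<in>UNIV. \<Sum>b\<in>UNIV. c a b * ((B$b \<bullet> B$i) * (B$j \<bullet> B$a))) = (\<Sum>a\<in>UNIV. if a = j then c a i else 0)"
      proof (intro sum.cong refl)
        fix a
        have "(\<Sum>b\<in>UNIV. c a b * ((B$b \<bullet> B$i) * (B$j \<bullet> B$a))) = (\<Sum>b\<in>UNIV. if b = i then c a b * (B$j \<bullet> B$a) else 0)"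
          using ONB_inner[OF B] by (intro sum.cong refl) simp
        also have "\<dots> = c a i * (B$j \<bullet> B$a)" by simp
        also have "\<dots> = (if a = j then c a i else 0)" using ONB_inner[OF B, of j a] by auto
        finally show "(\<Sum>b\<in>UNIV. c a b * ((B$b \<bullet> B$i) * (B$j \<bullet> B$a))) = (if a = j then c a i else 0)" .
      qed
      also have "(\<Sum>a\<in>UNIV. \<Sum>b\<in>UNIV. c a b * ((B$a \<bullet> B$i) * (B$j \<bullet> B$b))) = (\<Sum>a\<in>UNIV. if a = i then c a j else 0)"
      proof (intro sum.cong refl)
        fix a
        have "(\<Sum>b\<in>UNIV. c a b * ((B$a \<bullet> B$i) * (B$j \<bullet> B$b))) = (\<Sum>b\<in>UNIV. if b = j then c a b * (B$a \<bullet> B$i) else 0)"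
          using ONB_inner[OF B] by (intro sum.cong refl) (auto simp: inner_commute)
        also have "\<dots> = c a j * (B$a \<bullet> B$i)" by simp
        also have "\<dots> = (if a = i then c a j else 0)" using ONB_inner[OF B, of a i] by auto
        finally show "(\<Sum>b\<in>UNIV. c a b * ((B$a \<bullet> B$i) * (B$j \<bullet> B$b))) = (if a = i then c a j else 0)" .
      qed
      finally show ?thesis by simp
    qed
    have cne: "c j i - c i j \<noteq> 0" if "i \<noteq> j" for i j
      using r that by (auto simp: c_def inj_eq)
    define F1 where "F1 = (\<lambda>(i,j). (lam j - lam i) / (\<nu> i - \<nu> j)) ` (UNIV :: ('n \<times> 'n) set)"
    define F2 where "F2 = (\<lambda>(i,j). - (B$j \<bullet> (L *v B$i)) / (c j i - c i j)) ` (UNIV :: ('n \<times> 'n) set)"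
    obtain \<delta> where \<delta>: "0 < \<delta>" "\<delta> < \<epsilon> / (2 * (norm D1 + 1))" "\<delta> \<notin> F1"
    proof -
      have "0 < 2 * (norm D1 + 1)" by (smt (verit) norm_ge_zero)
      then have "0 < \<epsilon> / (2 * (norm D1 + 1))" using \<epsilon> by simp
      moreover have "finite F1" unfolding F1_def by simp
      ultimately show ?thesis using avoid_finite that by blast
    qed
    obtain \<eta> where \<eta>: "0 < \<eta>" "\<eta> < \<epsilon> / (2 * (norm D2 + 1))" "\<eta> \<notin> F2"
    proof -
      have "0 < 2 * (norm D2 + 1)" by (smt (verit) norm_ge_zero)
      then have "0 < \<epsilon> / (2 * (norm D2 + 1))" using \<epsilon> by simp
      moreover have "finite F2" unfolding F2_def by simp
      ultimately show ?thesis using avoid_finite that by blast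
    qed
    define S' where "S' = S + \<delta> *\<^sub>R D1"
    define L' where "L' = L + \<eta> *\<^sub>R D2"
    define X' where "X' = S' + L'"
    have sS': "symmetric_mat S'" using sS sD1
      by (simp add: S'_def symmetric_mat_def transpose_add transpose_scalar)
    have sL': "skew_mat L'" using sL sD2
      by (simp add: L'_def skew_mat_def transpose_add transpose_scalar)
    have parts: "msym X' = S'" "mskw X' = L'" using sym_skw_parts[OF sS' sL'] by (simp_all add: X'_def)
    define lam' where "lam' i = lam i + \<delta> * \<nu> i" for i
    have eB': "\<forall>i. msym X' *v (B$i) = lam' i *\<^sub>R B$i"
      using eB D1v by (simp add: parts S'_def lam'_def matrix_vector_mult_add_rdistrib
          matrix_vector_mult_scaleR scaleR_mv scaleR_add_left)
    have inj': "inj lam'"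
    proof (rule injI, rule ccontr)
      fix i j assume e: "lam' i = lam' j" and ij: "i \<noteq> j"
      have nn: "\<nu> i - \<nu> j \<noteq> 0" using r ij by (simp add: \<nu>_def inj_eq)
      have "\<delta> * (\<nu> i - \<nu> j) = lam j - lam i" using e by (simp add: lam'_def algebra_simps)
      then have "\<delta> = (lam j - lam i) / (\<nu> i - \<nu> j)" using nn by (simp add: field_simps)
      then have "\<delta> \<in> F1" unfolding F1_def by (auto intro!: image_eqI[of _ _ "(i,j)"])
      then show False using \<delta>(3) by simp
    qed
    have nz: "B$j \<bullet> (L' *v B$i) \<noteq> 0" if ij: "i \<noteq> j" for i j
    proof
      assume e: "B$j \<bullet> (L' *v B$i) = 0"
      have "B$j \<bullet> (L' *v B$i) = B$j \<bullet> (L *v B$i) + \<eta> * (c j i - c i j)"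
        using D2e[of j i] by (simp add: L'_def matrix_vector_mult_add_rdistrib matrix_vector_mult_scaleR scaleR_mv inner_add_right)
      then have "\<eta> = - (B$j \<bullet> (L *v B$i)) / (c j i - c i j)" using e cne[OF ij] by (simp add: field_simps)
      then have "\<eta> \<in> F2" unfolding F2_def by (auto intro!: image_eqI[of _ _ "(i,j)"])
      then show False using \<eta>(3) by simp
    qed
    have nJ: "\<not> Jcond B (mskw X')"
    proof
      assume "Jcond B (mskw X')"
      then obtain J where J: "J \<noteq> {}" "J \<noteq> UNIV" "\<forall>i\<in>J. \<forall>j. j \<notin> J \<longrightarrow> B$j \<bullet> (L' *v B$i) = 0"
        unfolding Jcond_def parts by blast
      obtain i where i: "i \<in> J" using J(1) by blast
      obtain j where j: "j \<notin> J" using J(2) by blast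
      have "i \<noteq> j" using i j by blast
      then show False using nz J(3) i j by blast
    qed
    have XM: "X' \<in> M_set" by (rule M_suff[OF B eB' inj' nJ])
    have XX: "X = S + L" using msym_skwp[of X] by (simp add: S_def L_def)
    have "dist X' X = norm (\<delta> *\<^sub>R D1 + \<eta> *\<^sub>R D2)"
      by (simp add: dist_norm X'_def S'_def L'_def XX algebra_simps)
    also have "\<dots> \<le> \<delta> * norm D1 + \<eta> * norm D2"
      using \<delta>(1) \<eta>(1) by (metis (no_types) abs_of_pos norm_scaleR norm_triangle_ineq)
    also have "\<dots> < \<epsilon>"
    proof -
      have "\<delta> * norm D1 \<le> \<delta> * (norm D1 + 1)" using \<delta>(1) by simp
      also have "\<dots> < \<epsilon> / 2" using \<delta>(2) by (simp add: field_simps add_pos_nonneg)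
      finally have 1: "\<delta> * norm D1 < \<epsilon> / 2" .
      have "\<eta> * norm D2 \<le> \<eta> * (norm D2 + 1)" using \<eta>(1) by simp
      also have "\<dots> < \<epsilon> / 2" using \<eta>(2) by (simp add: field_simps add_pos_nonneg)
      finally have 2: "\<eta> * norm D2 < \<epsilon> / 2" .
      show ?thesis using 1 2 by simp
    qed
    finally have "\<exists>Y\<in>M_set. dist Y X < \<epsilon>" using XM by blast
  }
  then show ?thesis by (auto simp: closure_approachable)
qed

lemma meager_compl_M: "meager (UNIV - (M_set :: (real^'n^'n) set))"
proof -
  have "interior (closure (UNIV - (M_set :: (real^'n^'n) set))) = {}"
  proof -
    have "closed (UNIV - (M_set :: (real^'n^'n) set))" using open_M by (simp add: Compl_eq_Diff_UNIV[symmetric] open_closed)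
    then have "closure (UNIV - (M_set :: (real^'n^'n) set)) = - M_set" by (simp add: Compl_eq_Diff_UNIV)
    moreover have "closure (M_set :: (real^'n^'n) set) = UNIV" by (rule dense_M)
    ultimately show ?thesis by (simp add: interior_complement)
  qed
  then show ?thesis unfolding meager_def by (intro exI[of _ "\<lambda>k. UNIV - M_set"]) simp
qed

lemma powser_zero_coeffs:
  fixes d :: "nat \<Rightarrow> real"
  assumes z: "\<And>s. (\<lambda>n. d n * s^n) sums 0"
  shows "d m = 0"
proof (induction m rule: less_induct)
  case (less m)
  have shift: "(\<lambda>n. d (n + m) * s^n) sums 0" if s: "s \<noteq> 0" for s
  proof -
    have "(\<lambda>i. d (i+m) * s^(i+m)) sums 0"
      using sums_zero_iff_shift[of m "\<lambda>i. d i * s^i" 0] less z[of s] by simp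
    then have "(\<lambda>i. d (i+m) * s^(i+m) / s^m) sums (0 / s^m)" by (rule sums_divide)
    moreover have "d (i+m) * s^(i+m) / s^m = d (i + m) * s^i" for i
      using s by (simp add: power_add)
    ultimately show ?thesis by simp
  qed
  have "((\<lambda>s::real. 0) \<longlongrightarrow> d (0 + m)) (at 0)"
    by (rule powser_limit_0_strong[of 1]) (use shift in auto)
  then show "d m = 0" by (simp add: tendsto_const_iff)
qed

definition mps :: "(real \<Rightarrow> real^'n^'n) \<Rightarrow> (nat \<Rightarrow> real^'n^'n) \<Rightarrow> bool" where
  "mps F c \<longleftrightarrow> (\<forall>s i j. (\<lambda>n. (c n)$i$j * s^n) sums (F s)$i$j)"

lemma mps_zero:
  assumes "mps F c" "\<And>s. F s = 0"
  shows "c n = 0"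
proof -
  have "(c n)$i$j = 0" for i j
    using powser_zero_coeffs[of "\<lambda>n. (c n)$i$j" n] assms unfolding mps_def by simp
  then show ?thesis by (simp add: vec_eq_iff)
qed

lemma mps_linear:
  assumes "mps F c"
  shows "mps (\<lambda>s. Q ** F s - F s ** Q) (\<lambda>n. Q ** c n - c n ** Q)"
  unfolding mps_def
proof (intro allI)
  fix s i j
  have 1: "(\<lambda>n. (\<Sum>l\<in>UNIV. Q$i$l * ((c n)$l$j * s^n))) sums (\<Sum>l\<in>UNIV. Q$i$l * (F s)$l$j)"
    using assms unfolding mps_def by (intro sums_sum sums_mult) auto
  have 2: "(\<lambda>n. (\<Sum>l\<in>UNIV. ((c n)$i$l * s^n) * Q$l$j)) sums (\<Sum>l\<in>UNIV. (F s)$i$l * Q$l$j)"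
    using assms unfolding mps_def by (intro sums_sum sums_mult2) auto
  have "(\<lambda>n. (\<Sum>l\<in>UNIV. Q$i$l * ((c n)$l$j * s^n)) - (\<Sum>l\<in>UNIV. ((c n)$i$l * s^n) * Q$l$j))
     sums ((\<Sum>l\<in>UNIV. Q$i$l * (F s)$l$j) - (\<Sum>l\<in>UNIV. (F s)$i$l * Q$l$j))"
    by (rule sums_diff[OF 1 2])
  then show "(\<lambda>n. (Q ** c n - c n ** Q)$i$j * s^n) sums (Q ** F s - F s ** Q)$i$j"
    by (simp add: matrix_matrix_mult_def right_diff_distrib sum_distrib_left mult_ac)
qed

lemma mps_abs:
  assumes "mps F a"
  shows "summable (\<lambda>n. norm ((a n)$i$j * s^n))"
proof -
  have "(\<lambda>n. (a n)$i$j * (\<bar>s\<bar> + 1)^n) sums (F (\<bar>s\<bar> + 1))$i$j"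
    using assms unfolding mps_def by blast
  then have "summable (\<lambda>n. (a n)$i$j * (\<bar>s\<bar> + 1)^n)" by (rule sums_summable)
  then show ?thesis by (rule powser_insidea) simp
qed

lemma mps_mult:
  assumes A: "mps F a" and B: "mps G b"
  shows "mps (\<lambda>s. F s ** G s) (\<lambda>n. \<Sum>m\<le>n. a m ** b (n - m))"
  unfolding mps_def
proof (intro allI)
  fix s i j
  have cp: "(\<lambda>k. (\<Sum>m\<le>k. (a m)$i$l * (b (k - m))$l$j) * s^k) sums ((F s)$i$l * (G s)$l$j)" for l
  proof -
    have "(\<lambda>k. \<Sum>m\<le>k. ((a m)$i$l * s^m) * ((b (k - m))$l$j * s^(k - m))) sums
       ((\<Sum>k. (a k)$i$l * s^k) * (\<Sum>k. (b k)$l$j * s^k))"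
      by (rule Cauchy_product_sums[OF mps_abs[OF A] mps_abs[OF B]])
    moreover have "(\<Sum>k. (a k)$i$l * s^k) = (F s)$i$l"
    proof -
      have "(\<lambda>k. (a k)$i$l * s^k) sums (F s)$i$l" using A unfolding mps_def by blast
      then show ?thesis by (rule sums_unique[symmetric])
    qed
    moreover have "(\<Sum>k. (b k)$l$j * s^k) = (G s)$l$j"
    proof -
      have "(\<lambda>k. (b k)$l$j * s^k) sums (G s)$l$j" using B unfolding mps_def by blast
      then show ?thesis by (rule sums_unique[symmetric])
    qed
    moreover have "(\<Sum>m\<le>k. ((a m)$i$l * s^m) * ((b (k - m))$l$j * s^(k - m))) =
        (\<Sum>m\<le>k. (a m)$i$l * (b (k - m))$l$j) * s^k" for k
    proof -
      have pm: "((a m)$i$l * s^m) * ((b (k - m))$l$j * s^(k - m)) = ((a m)$i$l * (b (k - m))$l$j) * s^k"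
        if "m \<le> k" for m
      proof -
        have "s^m * s^(k-m) = s^k" using that by (simp add: power_add[symmetric])
        then show ?thesis by (simp add: mult_ac)
      qed
      have "(\<Sum>m\<le>k. ((a m)$i$l * s^m) * ((b (k - m))$l$j * s^(k - m))) = (\<Sum>m\<le>k. ((a m)$i$l * (b (k - m))$l$j) * s^k)"
        by (rule sum.cong[OF refl]) (simp add: pm)
      then show ?thesis by (simp add: sum_distrib_right)
    qed
    ultimately show ?thesis by simp
  qed
  have "(\<lambda>k. \<Sum>l\<in>UNIV. (\<Sum>m\<le>k. (a m)$i$l * (b (k - m))$l$j) * s^k) sums (\<Sum>l\<in>UNIV. (F s)$i$l * (G s)$l$j)"
    by (intro sums_sum cp)
  moreover have "(\<Sum>l\<in>UNIV. (\<Sum>m\<le>k. (a m)$i$l * (b (k - m))$l$j) * s^k) = ((\<Sum>m\<le>k. a m ** b (k - m))$i$j) * s^k" for k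
  proof -
    have "((\<Sum>m\<le>k. a m ** b (k - m))$i$j) = (\<Sum>m\<le>k. \<Sum>l\<in>UNIV. (a m)$i$l * (b (k-m))$l$j)"
      by (simp add: sum_component matrix_matrix_mult_def)
    also have "\<dots> = (\<Sum>l\<in>UNIV. \<Sum>m\<le>k. (a m)$i$l * (b (k-m))$l$j)" by (rule sum.swap)
    finally show ?thesis by (simp add: sum_distrib_right)
  qed
  ultimately show "(\<lambda>n. (\<Sum>m\<le>n. a m ** b (n - m))$i$j * s^n) sums (F s ** G s)$i$j"
    by (simp add: matrix_matrix_mult_def)
qed

lemma mat_pow_scale: "mat_pow (s *\<^sub>R A) k = s^k *\<^sub>R mat_pow A k"
  by (induction k) (auto simp: vec_eq_iff matrix_matrix_mult_def sum_distrib_left mult_ac)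

lemma mat_pow_entry_bound:
  fixes A :: "real^'n^'n"
  assumes a: "\<And>i j. \<bar>A$i$j\<bar> \<le> a"
  shows "\<bar>(mat_pow A k)$i$j\<bar> \<le> (real CARD('n) * a)^k"
proof (induction k arbitrary: i j)
  case 0 then show ?case by (simp add: mat_def)
next
  case (Suc k)
  have "\<bar>(mat_pow A (Suc k))$i$j\<bar> = \<bar>\<Sum>l\<in>UNIV. A$i$l * (mat_pow A k)$l$j\<bar>"
    by (simp add: matrix_matrix_mult_def)
  also have "\<dots> \<le> (\<Sum>l\<in>UNIV. \<bar>A$i$l\<bar> * \<bar>(mat_pow A k)$l$j\<bar>)"
    by (rule order_trans[OF sum_abs]) (simp add: abs_mult)
  also have "\<dots> \<le> (\<Sum>l\<in>(UNIV::'n set). a * (real CARD('n) * a)^k)"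
  proof (rule sum_mono)
    fix l :: 'n
    show "\<bar>A$i$l\<bar> * \<bar>(mat_pow A k)$l$j\<bar> \<le> a * (real CARD('n) * a)^k"
      by (rule mult_mono[OF a Suc.IH]) (auto intro: order_trans[OF abs_ge_zero a])
  qed
  also have "\<dots> = (real CARD('n) * a)^(Suc k)" by simp
  finally show ?case .
qed

lemma sums_matrix:
  fixes f :: "nat \<Rightarrow> real^'n^'m"
  assumes "\<And>i j. (\<lambda>n. f n $i$j) sums (L$i$j)"
  shows "f sums L"
  unfolding sums_def
proof (intro vec_tendstoI)
  fix i j
  have "(\<lambda>n. \<Sum>k<n. f k $i$j) \<longlonglongrightarrow> L$i$j" using assms[of i j] by (simp add: sums_def)
  then show "(\<lambda>n. (\<Sum>k<n. f k) $ i $ j) \<longlonglongrightarrow> L$i$j" by (simp add: sum_component)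
qed

lemma mps_exp:
  fixes A :: "real^'n^'n"
  shows "mps (\<lambda>s. mat_exp (s *\<^sub>R A)) (\<lambda>n. (1 / fact n) *\<^sub>R mat_pow A n)"
  unfolding mps_def
proof (intro allI)
  fix s :: real and i0 j0 :: 'n
  define a where "a = (\<Sum>i\<in>UNIV. \<Sum>j\<in>UNIV. \<bar>A$i$j\<bar>)"
  have a: "\<bar>A$i$j\<bar> \<le> a" for i j
  proof -
    have "\<bar>A$i$j\<bar> \<le> (\<Sum>j\<in>UNIV. \<bar>A$i$j\<bar>)" by (rule member_le_sum) auto
    also have "\<dots> \<le> a" unfolding a_def by (rule member_le_sum[of i]) (auto intro: sum_nonneg)
    finally show ?thesis .
  qed
  define g where "g = (\<lambda>i j k. ((1 / fact k) *\<^sub>R mat_pow A k)$i$j * s^k)"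
  have sg: "summable (g i j)" for i j
  proof (rule summable_comparison_test')
    show "summable (\<lambda>k. inverse (fact k) * (real CARD('n) * a * \<bar>s\<bar>)^k)" by (rule summable_exp)
    fix k :: nat
    have "norm (g i j k) = inverse (fact k) * (\<bar>(mat_pow A k)$i$j\<bar> * \<bar>s\<bar>^k)"
      by (simp add: g_def abs_mult power_abs divide_inverse)
    also have "\<dots> \<le> inverse (fact k) * ((real CARD('n) * a)^k * \<bar>s\<bar>^k)"
      by (intro mult_left_mono mult_right_mono mat_pow_entry_bound a) auto
    also have "\<dots> = inverse (fact k) * (real CARD('n) * a * \<bar>s\<bar>)^k" by (simp add: power_mult_distrib)
    finally show "norm (g i j k) \<le> inverse (fact k) * (real CARD('n) * a * \<bar>s\<bar>)^k" .
  qed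
  define L where "L = (\<chi> i j. suminf (g i j))"
  have "(\<lambda>k. (1 / fact k) *\<^sub>R mat_pow (s *\<^sub>R A) k) sums L"
  proof (rule sums_matrix)
    fix i j
    have "(\<lambda>k. ((1 / fact k) *\<^sub>R mat_pow (s *\<^sub>R A) k)$i$j) = g i j"
      by (simp add: g_def mat_pow_scale fun_eq_iff mult_ac)
    then show "(\<lambda>k. ((1 / fact k) *\<^sub>R mat_pow (s *\<^sub>R A) k)$i$j) sums L$i$j"
      using summable_sums[OF sg] by (simp add: L_def)
  qed
  then have "mat_exp (s *\<^sub>R A) = L" unfolding mat_exp_def by (metis sums_unique)
  then show "(\<lambda>n. ((1 / fact n) *\<^sub>R mat_pow A n)$i0$j0 * s^n) sums (mat_exp (s *\<^sub>R A))$i0$j0"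
  proof -
    have "g i0 j0 sums L$i0$j0" using summable_sums[OF sg[of i0 j0]] by (simp add: L_def)
    then show ?thesis using \<open>mat_exp (s *\<^sub>R A) = L\<close> unfolding g_def by simp
  qed
qed

lemma mm_add_r: "(A + B) ** (C::real^'n^'n) = A ** C + B ** C"
  by (simp add: vec_eq_iff matrix_matrix_mult_def distrib_right sum.distrib)
lemma mm_add_l: "(C::real^'n^'n) ** (A + B) = C ** A + C ** B"
  by (simp add: vec_eq_iff matrix_matrix_mult_def distrib_left sum.distrib)
lemma mm_diff_r: "(A - B) ** (C::real^'n^'n) = A ** C - B ** C"
  by (simp add: vec_eq_iff matrix_matrix_mult_def left_diff_distrib sum_subtractf)
lemma mm_diff_l: "(C::real^'n^'n) ** (A - B) = C ** A - C ** B"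
  by (simp add: vec_eq_iff matrix_matrix_mult_def right_diff_distrib sum_subtractf)
lemma mm_neg_r: "(- A) ** (C::real^'n^'n) = - (A ** C)"
  by (simp add: vec_eq_iff matrix_matrix_mult_def sum_negf)
lemma mm_neg_l: "(C::real^'n^'n) ** (- A) = - (C ** A)"
  by (simp add: vec_eq_iff matrix_matrix_mult_def sum_negf)
lemma mm_scale_r: "(c *\<^sub>R A) ** (C::real^'n^'n) = c *\<^sub>R (A ** C)"
  by (simp add: vec_eq_iff matrix_matrix_mult_def sum_distrib_left mult_ac)
lemma mm_scale_l: "(C::real^'n^'n) ** (c *\<^sub>R A) = c *\<^sub>R (C ** A)"
  by (simp add: vec_eq_iff matrix_matrix_mult_def sum_distrib_left mult_ac)
lemma mv_sum: "(A::real^'n^'n) *v (\<Sum>k\<in>K. f k) = (\<Sum>k\<in>K. A *v f k)"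
  by (induction K rule: infinite_finite_induct) (auto simp: matrix_vector_right_distrib)

lemma neg_mv: "(- A) *v x = - (A *v (x::real^'n))"
  by (simp add: vec_eq_iff matrix_vector_mult_def sum_negf)

definition comm :: "real^'n^'n \<Rightarrow> real^'n^'n \<Rightarrow> bool" where
  "comm Q Y \<longleftrightarrow> Q ** Y = Y ** Q"

lemma comm_add: "comm Q A \<Longrightarrow> comm Q B \<Longrightarrow> comm Q (A + B)"
  by (simp add: comm_def mm_add_l mm_add_r)
lemma comm_diff: "comm Q A \<Longrightarrow> comm Q B \<Longrightarrow> comm Q (A - B)"
  by (simp add: comm_def mm_diff_l mm_diff_r)
lemma comm_scale: "comm Q A \<Longrightarrow> comm Q (c *\<^sub>R A)"
  by (simp add: comm_def mm_scale_l mm_scale_r)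
lemma comm_mult: "comm Q A \<Longrightarrow> comm Q B \<Longrightarrow> comm Q (A ** B)"
  unfolding comm_def by (metis matrix_mul_assoc)

lemma inner_mv_transpose: "x \<bullet> (A *v y) = (transpose A *v x) \<bullet> (y::real^'n)"
  by (simp add: dot_lmul_matrix)

lemma alg_ii:
  fixes M Q :: "real^'n^'n"
  assumes MM: "M \<in> M_set" and oQ: "orthogonal_matrix Q"
    and cS: "comm Q (msym M)" and cC: "comm Q (M ** transpose M - transpose M ** M)"
  shows "Q = mat 1 \<or> Q = - mat 1"
proof -
  define S where "S = msym M"
  define L where "L = mskw M"
  define C where "C = M ** transpose M - transpose M ** M"
  have sS: "symmetric_mat S" and sL: "skew_mat L" by (simp_all add: S_def L_def msym_sym mskw_skew)
  have MSL: "M = S + L" using msym_skwp[of M] by (simp add: S_def L_def)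
  have MTSL: "transpose M = S - L"
    using sS sL by (simp add: MSL transpose_add symmetric_mat_def skew_mat_def)
  obtain B :: "real^'n^'n" and lam where B0: "B ** transpose B = mat 1"
    and eB: "\<forall>i. S *v (B$i) = lam i *\<^sub>R B$i"
    using spectral[OF sS] by blast
  have B: "ONB B" using B0 by (simp add: ONB_def)
  have eBM: "\<forall>i. msym M *v (B$i) = lam i *\<^sub>R B$i" using eB by (simp add: S_def)
  have nec: "inj lam \<and> \<not> Jcond B L" using M_nec[OF MM B eBM] by (simp add: L_def)
  have QT: "transpose Q ** Q = mat 1" using oQ by (simp add: orthogonal_matrix_def)
  define \<epsilon> where "\<epsilon> i = B$i \<bullet> (Q *v B$i)" for i
  have QB: "Q *v B$i = \<epsilon> i *\<^sub>R B$i" for i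
  proof -
    have ev: "S *v (Q *v B$i) = lam i *\<^sub>R (Q *v B$i)"
    proof -
      have "S *v (Q *v B$i) = (S ** Q) *v B$i" by (simp add: matrix_vector_mul_assoc)
      also have "S ** Q = Q ** S" using cS by (simp add: comm_def S_def)
      also have "(Q ** S) *v B$i = Q *v (lam i *\<^sub>R B$i)" using eB by (simp add: matrix_vector_mul_assoc[symmetric])
      finally show ?thesis by (simp add: matrix_vector_mult_scaleR)
    qed
    have c0: "B$k \<bullet> (Q *v B$i) = 0" if "k \<noteq> i" for k
    proof -
      have "lam k \<noteq> lam i" using nec that by (simp add: inj_eq)
      then show ?thesis using eig_coeff[OF sS eB ev, of k] by simp
    qed
    have "Q *v B$i = (\<Sum>k\<in>UNIV. (B$k \<bullet> (Q *v B$i)) *\<^sub>R B$k)" by (rule ONB_expand[OF B])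
    also have "\<dots> = (\<Sum>k\<in>{i}. (B$k \<bullet> (Q *v B$i)) *\<^sub>R B$k)"
      using c0 by (intro sum.mono_neutral_right) auto
    finally show ?thesis by (simp add: \<epsilon>_def)
  qed
  have eps2: "\<epsilon> i * \<epsilon> i = 1" for i
  proof -
    have "B$i \<bullet> ((transpose Q ** Q) *v B$i) = B$i \<bullet> (transpose Q *v (Q *v B$i))"
      by (simp only: matrix_vector_mul_assoc)
    also have "\<dots> = (Q *v B$i) \<bullet> (Q *v B$i)"
      using inner_mv_transpose[of "B$i" "transpose Q" "Q *v B$i"] by (simp only: transpose_transpose)
    finally have "(Q *v B$i) \<bullet> (Q *v B$i) = 1" using QT ONB_inner[OF B, of i i] by simp
    then show ?thesis using QB[of i] ONB_inner[OF B, of i i] by simp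
  qed
  have QTB: "transpose Q *v B$j = \<epsilon> j *\<^sub>R B$j" for j
  proof -
    have "B$j = transpose Q *v (Q *v B$j)" using QT by (simp add: matrix_vector_mul_assoc)
    also have "\<dots> = \<epsilon> j *\<^sub>R (transpose Q *v B$j)" by (simp add: QB matrix_vector_mult_scaleR)
    finally have "\<epsilon> j *\<^sub>R B$j = (\<epsilon> j * \<epsilon> j) *\<^sub>R (transpose Q *v B$j)" by (metis scaleR_scaleR)
    then show ?thesis using eps2[of j] by simp
  qed
  have Ce: "B$j \<bullet> (C *v B$i) = 2 * (lam i - lam j) * (B$j \<bullet> (L *v B$i))" for i j
  proof -
    have LT: "transpose L = - L" using sL by (simp add: skew_mat_def)
    have a1: "B$j \<bullet> ((M ** transpose M) *v B$i) = (transpose M *v B$j) \<bullet> (transpose M *v B$i)"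
    proof -
      have "B$j \<bullet> ((M ** transpose M) *v B$i) = B$j \<bullet> (M *v (transpose M *v B$i))"
        by (simp only: matrix_vector_mul_assoc)
      also have "\<dots> = (transpose M *v B$j) \<bullet> (transpose M *v B$i)" by (rule inner_mv_transpose)
      finally show ?thesis .
    qed
    have a2: "B$j \<bullet> ((transpose M ** M) *v B$i) = (M *v B$j) \<bullet> (M *v B$i)"
    proof -
      have "B$j \<bullet> ((transpose M ** M) *v B$i) = B$j \<bullet> (transpose M *v (M *v B$i))"
        by (simp only: matrix_vector_mul_assoc)
      also have "\<dots> = (transpose (transpose M) *v B$j) \<bullet> (M *v B$i)" by (rule inner_mv_transpose)
      finally show ?thesis by (simp only: transpose_transpose)
    qed
    have tm: "transpose M *v B$k = lam k *\<^sub>R B$k - L *v B$k" for k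
      using eB by (simp add: MTSL matrix_vector_mult_diff_rdistrib)
    have mm: "M *v B$k = lam k *\<^sub>R B$k + L *v B$k" for k
      using eB by (simp add: MSL matrix_vector_mult_add_rdistrib)
    have lt: "(L *v B$j) \<bullet> B$i = - (B$j \<bullet> (L *v B$i))"
      using inner_mv_transpose[of "B$j" L "B$i"] LT by (simp add: inner_commute neg_mv)
    have "B$j \<bullet> (C *v B$i) = (transpose M *v B$j) \<bullet> (transpose M *v B$i) - (M *v B$j) \<bullet> (M *v B$i)"
      using a1 a2 by (simp add: C_def matrix_vector_mult_diff_rdistrib inner_diff_right)
    also have "\<dots> = 2 * (lam i - lam j) * (B$j \<bullet> (L *v B$i))"
      unfolding tm mm using lt
      by (simp add: inner_diff_left inner_diff_right inner_add_left inner_add_right algebra_simps)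
    finally show ?thesis .
  qed
  have key: "(\<epsilon> i - \<epsilon> j) * (B$j \<bullet> (C *v B$i)) = 0" for i j
  proof -
    have "B$j \<bullet> (Q *v (C *v B$i)) = (transpose Q *v B$j) \<bullet> (C *v B$i)" by (rule inner_mv_transpose)
    then have "B$j \<bullet> (Q *v (C *v B$i)) = \<epsilon> j * (B$j \<bullet> (C *v B$i))"
      by (simp only: QTB inner_scaleR_left)
    moreover have "Q *v (C *v B$i) = \<epsilon> i *\<^sub>R (C *v B$i)"
    proof -
      have "Q *v (C *v B$i) = (Q ** C) *v B$i" by (simp add: matrix_vector_mul_assoc)
      also have "Q ** C = C ** Q" using cC by (simp add: comm_def C_def)
      also have "(C ** Q) *v B$i = \<epsilon> i *\<^sub>R (C *v B$i)"
        by (simp add: matrix_vector_mul_assoc[symmetric] QB matrix_vector_mult_scaleR)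
      finally show ?thesis .
    qed
    ultimately show ?thesis by (simp add: algebra_simps)
  qed
  obtain i0 :: 'n where True by simp
  define e where "e = \<epsilon> i0"
  have allE: "\<epsilon> i = e" for i
  proof (rule ccontr)
    assume ne0: "\<epsilon> i \<noteq> e"
    then have ne: "\<epsilon> i \<noteq> \<epsilon> i0" by (simp add: e_def)
    define J where "J = {k. \<epsilon> k = \<epsilon> i0}"
    have "Jcond B L" unfolding Jcond_def
    proof (intro exI conjI)
      show "J \<noteq> {}" by (auto simp: J_def)
      show "J \<noteq> UNIV" using ne by (auto simp: J_def)
      show "\<forall>a\<in>J. \<forall>b. b \<notin> J \<longrightarrow> B$b \<bullet> (L *v B$a) = 0"
      proof (intro ballI allI impI)
        fix a b assume a: "a \<in> J" and b: "b \<notin> J"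
        have ab: "\<epsilon> a \<noteq> \<epsilon> b" using a b by (simp add: J_def)
        then have "a \<noteq> b" by auto
        then have "lam a \<noteq> lam b" using nec by (simp add: inj_eq)
        moreover have "(\<epsilon> a - \<epsilon> b) * (2 * (lam a - lam b) * (B$b \<bullet> (L *v B$a))) = 0"
          using key[of a b] Ce[of b a] by simp
        ultimately show "B$b \<bullet> (L *v B$a) = 0" using ab by simp
      qed
    qed
    then show False using nec by simp
  qed
  have Qv: "Q *v y = e *\<^sub>R y" for y
  proof -
    have "Q *v y = Q *v (\<Sum>k\<in>UNIV. (B$k \<bullet> y) *\<^sub>R B$k)" using ONB_expand[OF B, of y] by simp
    also have "\<dots> = (\<Sum>k\<in>UNIV. (B$k \<bullet> y) *\<^sub>R (e *\<^sub>R B$k))"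
      by (simp add: mv_sum matrix_vector_mult_scaleR QB allE)
    also have "\<dots> = e *\<^sub>R (\<Sum>k\<in>UNIV. (B$k \<bullet> y) *\<^sub>R B$k)" by (simp add: scaleR_sum_right mult.commute)
    also have "\<dots> = e *\<^sub>R y" using ONB_expand[OF B, of y] by simp
    finally show ?thesis .
  qed
  have Qe: "Q = e *\<^sub>R mat 1"
    by (simp add: matrix_eq Qv scaleR_mv)
  have "e * e = 1" using eps2[of i0] by (simp add: e_def)
  then have "(e - 1) * (e + 1) = 0" by (simp add: algebra_simps)
  then have "e = 1 \<or> e = -1" by (simp add: add_eq_0_iff)
  then show ?thesis using Qe by auto
qed

lemma mat_pow_1: "mat_pow A (Suc 0) = A"
  by simp

lemma mat_pow_2: "mat_pow A 2 = A ** A"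
  by (simp add: numeral_2_eq_2)

lemma part_ii:
  fixes M :: "real^'n^'n"
  assumes MM: "M \<in> M_set"
  shows "(\<Inter>x \<in> {0<..}. G_set (mat_rpow_neg x M ** mat_rpow_neg x (transpose M))) = {mat 1, - mat 1}"
proof (intro set_eqI iffI)
  fix Q assume "Q \<in> (\<Inter>x \<in> {0<..}. G_set (mat_rpow_neg x M ** mat_rpow_neg x (transpose M)))"
  then have QG: "\<And>x. x > 0 \<Longrightarrow> Q \<in> G_set (mat_rpow_neg x M ** mat_rpow_neg x (transpose M))" by auto
  have oQ: "orthogonal_matrix Q" using QG[of 1] by (simp add: G_set_def)
  define Pi where "Pi s = mat_exp (s *\<^sub>R M) ** mat_exp (s *\<^sub>R transpose M)" for s
  define p where "p n = (\<Sum>m\<le>n. ((1 / fact m) *\<^sub>R mat_pow M m) ** ((1 / fact (n - m)) *\<^sub>R mat_pow (transpose M) (n - m)))" for n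
  have mP: "mps Pi p"
    unfolding Pi_def p_def by (rule mps_mult[OF mps_exp mps_exp])
  have cP: "Q ** Pi s = Pi s ** Q" for s
  proof -
    have x: "exp (- s) > 0" by simp
    have "mat_rpow_neg (exp (- s)) A = mat_exp (s *\<^sub>R A)" for A :: "real^'n^'n"
      by (simp add: mat_rpow_neg_def)
    then show ?thesis using QG[OF x] by (simp add: G_set_def Pi_def)
  qed
  have cp: "comm Q (p n)" for n
    using mps_zero[OF mps_linear[OF mP, of Q], of n] cP by (simp add: comm_def)
  have p1: "p 1 = M + transpose M"
    by (simp add: p_def)
  have p2: "p 2 = (1/2) *\<^sub>R (transpose M ** transpose M) + M ** transpose M + (1/2) *\<^sub>R (M ** M)"
    by (simp add: p_def numeral_2_eq_2 mm_scale_l mm_scale_r)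
  have cS: "comm Q (msym M)"
    using comm_scale[OF cp[of 1], of "1/2"] p1 by (simp add: msym_def)
  have "M ** transpose M - transpose M ** M = 2 *\<^sub>R p 2 - p 1 ** p 1"
    unfolding p1 p2 by (simp add: mm_add_l mm_add_r scaleR_add_right algebra_simps) (simp add: vec_eq_iff)
  then have cC: "comm Q (M ** transpose M - transpose M ** M)"
    using comm_diff[OF comm_scale[OF cp[of 2]] comm_mult[OF cp[of 1] cp[of 1]]] by simp
  show "Q \<in> {mat 1, - mat 1}" using alg_ii[OF MM oQ cS cC] by simp
next
  fix Q :: "real^'n^'n" assume "Q \<in> {mat 1, - mat 1}"
  then have Q: "Q = mat 1 \<or> Q = - mat 1" by simp
  have oQ: "orthogonal_matrix Q"
    using Q by (auto simp: orthogonal_matrix_def transpose_minus mm_neg_l mm_neg_r)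
  have "Q ** P = P ** Q" for P :: "real^'n^'n"
    using Q by (auto simp: mm_neg_l mm_neg_r)
  then show "Q \<in> (\<Inter>x \<in> {0<..}. G_set (mat_rpow_neg x M ** mat_rpow_neg x (transpose M)))"
    using oQ by (simp add: G_set_def)
qed

theorem proposition5p2:
  assumes "CARD('n::finite) \<ge> 2"
  shows "open (M_set :: (real^'n^'n) set)
       \<and> closure (M_set :: (real^'n^'n) set) = UNIV
       \<and> meager (UNIV - (M_set :: (real^'n^'n) set))
       \<and> (\<forall>M \<in> (M_set :: (real^'n^'n) set).
            (\<Inter>x \<in> {0<..}. G_set (mat_rpow_neg x M ** mat_rpow_neg x (transpose M)))
              = {mat 1, - mat 1})"
  using open_M dense_M meager_compl_M part_ii by blast

end
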